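(* The generic offset polynomial satisfies $g\in\mathbb C[\bar x][d^2]$, i.e. only even powers of $d$ occur in $g(d,\bar x)$.
   Context: Let $f\in\mathbb C[y_1,y_2,y_3]$ be irreducible, defining a surface $\Sigma$; $f_i=\partial f/\partial y_i$, $h_{\rm imp}=\sum f_i^2$, not identically zero on $\Sigma$. The generic offset $\mathcal O_d(\Sigma)\subset\mathbb C^4$ is the Zariski closure of the projection to $(d,\bar x)$ of the solution set in $(d,\bar x,\bar y,u)$ of: $f(\bar y)=0$; $f_i(\bar y)(x_j-y_j)-f_j(\bar y)(x_i-y_i)=0$ ($i<j$); $\sum_i(x_i-y_i)^2-d^2=0$; $u\,h_{\rm imp}(\bar y)-1=0$. It is a hypersurface whose square-free defining polynomial (defined up to a nonzero constant) is the generic offset polynomial $g(d,\bar x)$. *)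

theory Defs
  imports "HOL-Computational_Algebra.Computational_Algebra"
begin

text \<open>Multivariate polynomials are encoded as nested univariate polynomials.
  A polynomial in C[y1,y2,y3] is a term of type complex poly poly poly, with
  y1 the outermost and y3 the innermost variable.  A polynomial in C[d,x1,x2,x3]
  is a term of type complex poly poly poly poly, with d the outermost variable,
  so its coefficients (coeff g k) are the polynomials in C[x1,x2,x3] multiplying d^k.\<close>

type_synonym mpoly3 = "complex poly poly poly"
type_synonym mpoly4 = "complex poly poly poly poly"

definition ev3 :: "mpoly3 \<Rightarrow> complex \<Rightarrow> complex \<Rightarrow> complex \<Rightarrow> complex" where
  "ev3 f y1 y2 y3 = poly (map_poly (\<lambda>q. poly (map_poly (\<lambda>r. poly r y3) q) y2) f) y1"

definition ev4 :: "mpoly4 \<Rightarrow> complex \<Rightarrow> complex \<Rightarrow> complex \<Rightarrow> complex \<Rightarrow> complex" where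
  "ev4 g d x1 x2 x3 = poly (map_poly (\<lambda>p. ev3 p x1 x2 x3) g) d"

definition pd1 :: "mpoly3 \<Rightarrow> mpoly3" where "pd1 f = pderiv f"
definition pd2 :: "mpoly3 \<Rightarrow> mpoly3" where "pd2 f = map_poly pderiv f"
definition pd3 :: "mpoly3 \<Rightarrow> mpoly3" where "pd3 f = map_poly (map_poly pderiv) f"

definition h_imp :: "mpoly3 \<Rightarrow> mpoly3" where
  "h_imp f = (pd1 f)^2 + (pd2 f)^2 + (pd3 f)^2"

definition offset_incidence :: "mpoly3 \<Rightarrow> (complex \<times> complex \<times> complex \<times> complex) set" where
  "offset_incidence f = {(d, x1, x2, x3). \<exists>y1 y2 y3 u.
     ev3 f y1 y2 y3 = 0 \<and>
     ev3 (pd1 f) y1 y2 y3 * (x2 - y2) - ev3 (pd2 f) y1 y2 y3 * (x1 - y1) = 0 \<and>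
     ev3 (pd1 f) y1 y2 y3 * (x3 - y3) - ev3 (pd3 f) y1 y2 y3 * (x1 - y1) = 0 \<and>
     ev3 (pd2 f) y1 y2 y3 * (x3 - y3) - ev3 (pd3 f) y1 y2 y3 * (x2 - y2) = 0 \<and>
     (x1 - y1)^2 + (x2 - y2)^2 + (x3 - y3)^2 - d^2 = 0 \<and>
     u * ev3 (h_imp f) y1 y2 y3 - 1 = 0}"

definition zero_set4 :: "mpoly4 \<Rightarrow> (complex \<times> complex \<times> complex \<times> complex) set" where
  "zero_set4 g = {(d, x1, x2, x3). ev4 g d x1 x2 x3 = 0}"

definition zariski_closure4 :: "(complex \<times> complex \<times> complex \<times> complex) set \<Rightarrow> (complex \<times> complex \<times> complex \<times> complex) set" where
  "zariski_closure4 S = {z. \<forall>p. S \<subseteq> zero_set4 p \<longrightarrow> z \<in> zero_set4 p}"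

definition generic_offset :: "mpoly3 \<Rightarrow> (complex \<times> complex \<times> complex \<times> complex) set" where
  "generic_offset f = zariski_closure4 (offset_incidence f)"

end

theory Submission
  imports Defs "HOL-Computational_Algebra.Field_as_Ring"
begin

definition homE :: "('a::comm_ring_1 \<Rightarrow> 'p \<Rightarrow> complex) \<Rightarrow> bool" where
 "homE E \<longleftrightarrow> (\<forall>pt. E 0 pt = 0 \<and> E 1 pt = 1 \<and> (\<forall>a b. E (a+b) pt = E a pt + E b pt \<and> E (a*b) pt = E a pt * E b pt))"
definition NZ :: "('a::comm_ring_1 \<Rightarrow> 'p \<Rightarrow> complex) \<Rightarrow> bool" where
 "NZ E \<longleftrightarrow> (\<forall>a. a \<noteq> 0 \<longrightarrow> (\<exists>pt. E a pt \<noteq> 0))"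
definition NS :: "('a::comm_ring_1 \<Rightarrow> 'p \<Rightarrow> complex) \<Rightarrow> bool" where
 "NS E \<longleftrightarrow> (\<forall>q p. irreducible q \<longrightarrow> (\<forall>pt. E q pt = 0 \<longrightarrow> E p pt = 0) \<longrightarrow> q dvd p)"
definition liftE :: "('a::comm_ring_1 \<Rightarrow> 'p \<Rightarrow> complex) \<Rightarrow> 'a poly \<Rightarrow> 'p \<times> complex \<Rightarrow> complex" where
 "liftE E p x = poly (map_poly (\<lambda>c. E c (fst x)) p) (snd x)"

lemma map_poly_add_hom:
  assumes "h 0 = 0" "\<And>a b. h (a+b) = h a + h b"
  shows "map_poly h (p + q) = map_poly h p + map_poly h q"
  by (intro poly_eqI) (simp add: coeff_map_poly assms)

lemma map_poly_mult_hom: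
  fixes h :: "'a::comm_ring_1 \<Rightarrow> 'b::comm_ring_1"
  assumes "h 0 = 0" "\<And>a b. h (a+b) = h a + h b" "\<And>a b. h (a*b) = h a * h b"
  shows "map_poly h (p * q) = map_poly h p * map_poly h q"
proof (induction p)
  case 0 then show ?case by simp
next
  case (pCons a p)
  have "map_poly h (pCons a p * q) = map_poly h (smult a q) + map_poly h (pCons 0 (p*q))"
    by (simp add: map_poly_add_hom assms)
  also have "\<dots> = smult (h a) (map_poly h q) + pCons 0 (map_poly h p * map_poly h q)"
    using pCons by (simp add: map_poly_smult map_poly_pCons assms)
  also have "\<dots> = map_poly h (pCons a p) * map_poly h q"
    by (simp add: map_poly_pCons assms)
  finally show ?case .
qed

lemma homE_D: assumes "homE E" shows "E 0 pt = 0" "E 1 pt = 1" "E (a+b) pt = E a pt + E b pt"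
  "E (a*b) pt = E a pt * E b pt"
  using assms unfolding homE_def by auto

lemma homE_minus: assumes "homE E" shows "E (-a) pt = - E a pt"
proof -
  have "E (a + -a) pt = 0" using homE_D[OF assms] by simp
  then show ?thesis using homE_D(3)[OF assms, of a "-a" pt] by (simp add: add_eq_0_iff)
qed

lemma homE_power: assumes "homE E" shows "E (a^n) pt = E a pt ^ n"
  by (induction n) (simp_all add: homE_D[OF assms])

lemma homE_lift: assumes "homE E" shows "homE (liftE E)"
  unfolding homE_def liftE_def
  by (simp add: map_poly_add_hom map_poly_mult_hom homE_D[OF assms])

lemma liftE_const: assumes "homE E" shows "liftE E [:a:] x = E a (fst x)"
  unfolding liftE_def by (simp add: map_poly_pCons homE_D[OF assms])

lemma NZ_lift: assumes "homE E" "NZ E" shows "NZ (liftE E)"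
  unfolding NZ_def
proof (intro allI impI)
  fix p :: "'a poly" assume p: "p \<noteq> 0"
  then have "lead_coeff p \<noteq> 0" by simp
  then obtain pt where pt: "E (lead_coeff p) pt \<noteq> 0" using assms(2) unfolding NZ_def by blast
  have "coeff (map_poly (\<lambda>c. E c pt) p) (degree p) \<noteq> 0"
    using pt by (simp add: coeff_map_poly homE_D[OF assms(1)])
  then have "map_poly (\<lambda>c. E c pt) p \<noteq> 0" by auto
  then obtain z where "poly (map_poly (\<lambda>c. E c pt) p) z \<noteq> 0"
    using poly_all_0_iff_0 by blast
  then show "\<exists>x. liftE E p x \<noteq> 0" unfolding liftE_def by (intro exI[of _ "(pt,z)"]) simp
qed


lemma liftE_simps: assumes "homE E"
  shows "liftE E (p + q) x = liftE E p x + liftE E q x" "liftE E (p * q) x = liftE E p x * liftE E q x"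
  using homE_D[OF homE_lift[OF assms]] by auto

lemma smult_as_mult: "smult c p = [:c:] * p" by simp

lemma ideal_step:
  fixes q p :: "'a::{factorial_ring_gcd, semiring_gcd_mult_normalize} poly"
  assumes q0: "q \<noteq> 0" and qirr: "irreducible q" and dq: "degree q > 0" and nd: "\<not> q dvd p"
  shows "\<exists>A B r. r \<noteq> 0 \<and> A * q + B * p = [:r:]"
proof -
  define I where "I = {s. \<exists>A B. s = A * q + B * p}"
  have Iq: "q \<in> I" proof -
    have "q = 1 * q + 0 * p" by simp
    then show ?thesis unfolding I_def by blast
  qed
  define m where "m = (LEAST n. \<exists>s\<in>I. s \<noteq> 0 \<and> degree s = n)"
  have ex: "\<exists>s\<in>I. s \<noteq> 0 \<and> degree s = m"
    unfolding m_def by (rule LeastI[of _ "degree q"]) (use Iq q0 in blast)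
  then obtain s where sI: "s \<in> I" and s0: "s \<noteq> 0" and ds: "degree s = m" by blast
  have min: "\<And>t. t \<in> I \<Longrightarrow> t \<noteq> 0 \<Longrightarrow> m \<le> degree t"
    unfolding m_def by (rule Least_le) blast
  have key: "\<exists>a. a \<noteq> 0 \<and> s dvd smult a t" if tI: "t \<in> I" for t
  proof -
    define r where "r = pseudo_mod t s"
    obtain a Q where a0: "a \<noteq> 0" and eq: "smult a t = s * Q + r"
      using pseudo_mod(1)[OF s0, of t] unfolding r_def by blast
    have rd: "r = 0 \<or> degree r < degree s" using pseudo_mod(2)[OF s0, of t] unfolding r_def by blast
    have "r \<in> I"
    proof -
      from tI obtain A1 B1 where t: "t = A1 * q + B1 * p" unfolding I_def by blast
      from sI obtain A2 B2 where s: "s = A2 * q + B2 * p" unfolding I_def by blast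
      have "r = smult a t - s * Q" using eq by simp
      also have "\<dots> = (smult a A1 - A2 * Q) * q + (smult a B1 - B2 * Q) * p"
        unfolding t s by (simp add: algebra_simps smult_add_right)
      finally show ?thesis unfolding I_def by blast
    qed
    then have "r = 0" using min[of r] rd ds by (cases "r = 0") auto
    then show ?thesis using eq a0 by auto
  qed
  have qprime: "prime_elem q" using qirr by (simp add: prime_elem_iff_irreducible)
  have const_ndvd: "\<not> q dvd [:c:]" if "c \<noteq> 0" for c
    using dvd_imp_degree_le[of q "[:c:]"] that dq by auto
  have "degree s = 0"
  proof (rule ccontr)
    assume nz: "degree s \<noteq> 0"
    obtain a where a0: "a \<noteq> 0" and sd: "s dvd smult a q" using key[OF Iq] by blast
    then obtain Q where Q: "smult a q = s * Q" by blast
    have "q dvd s * Q" unfolding Q[symmetric] smult_as_mult by (rule dvd_mult, rule dvd_refl)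
    then have "q dvd s \<or> q dvd Q" by (simp only: prime_elem_dvd_mult_iff[OF qprime])
    then show False
    proof
      assume "q dvd Q"
      then obtain Q' where "Q = q * Q'" by blast
      then have "q * [:a:] = q * (s * Q')" using Q by (simp only: smult_as_mult ac_simps)
      then have "[:a:] = s * Q'" using q0 mult_left_cancel by blast
      moreover have "Q' \<noteq> 0" using a0 calculation by auto
      ultimately have "degree [:a:] = degree s + degree Q'" using s0
        by (simp add: degree_mult_eq)
      then have "degree s = 0" by simp
      with nz show False by simp
    next
      assume qs: "q dvd s"
      have pI: "p \<in> I" proof -
        have "p = 0 * q + 1 * p" by simp
        then show ?thesis unfolding I_def by blast
      qed
      obtain a' where a'0: "a' \<noteq> 0" and "s dvd smult a' p" using key[OF pI] by blast
      then have "s dvd [:a':] * p" by (simp only: smult_as_mult)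
      then have "q dvd [:a':] * p" using qs by (rule dvd_trans[rotated])
      then have "q dvd [:a':] \<or> q dvd p" by (simp only: prime_elem_dvd_mult_iff[OF qprime])
      then show False using const_ndvd[OF a'0] nd by blast
    qed
  qed
  then have sc: "s = [:coeff s 0:]" using degree_0_id by metis
  have "coeff s 0 \<noteq> 0" using s0 sc by (metis pCons_eq_0_iff)
  moreover obtain A B where "s = A * q + B * p" using sI unfolding I_def by blast
  ultimately show ?thesis using sc by auto
qed


lemma NS_lift:
  fixes E :: "'a::{factorial_ring_gcd, semiring_gcd_mult_normalize} \<Rightarrow> 'p \<Rightarrow> complex"
  assumes hE: "homE E" and nz: "NZ E" and ns: "NS E"
  shows "NS (liftE E)"
  unfolding NS_def
proof (intro allI impI)
  fix q p :: "'a poly"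
  assume qirr: "irreducible q" and Z: "\<forall>x. liftE E q x = 0 \<longrightarrow> liftE E p x = 0"
  have q0: "q \<noteq> 0" using qirr by auto
  show "q dvd p"
  proof (cases "degree q = 0")
    case True
    then have qc: "q = [:coeff q 0:]" using degree_0_id by metis
    define a where "a = coeff q 0"
    have "irreducible [:a:]" using qirr qc unfolding a_def by simp
    then have airr: "irreducible a" using irreducible_const_poly_iff[of a] by blast
    have "a dvd coeff p n" for n
    proof -
      have "\<forall>pt. E a pt = 0 \<longrightarrow> E (coeff p n) pt = 0"
      proof (intro allI impI)
        fix pt assume "E a pt = 0"
        then have "\<forall>z. liftE E q (pt, z) = 0" using liftE_const[OF hE, of a] qc unfolding a_def by simp
        then have "\<forall>z. liftE E p (pt, z) = 0" using Z by blast
        then have "\<forall>z. poly (map_poly (\<lambda>c. E c pt) p) z = 0" unfolding liftE_def by simp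
        then have "map_poly (\<lambda>c. E c pt) p = 0" using poly_all_0_iff_0 by blast
        then have "coeff (map_poly (\<lambda>c. E c pt) p) n = 0" by simp
        then show "E (coeff p n) pt = 0" by (simp add: coeff_map_poly homE_D[OF hE])
      qed
      then show ?thesis using ns airr unfolding NS_def by blast
    qed
    then have "[:a:] dvd p" using const_poly_dvd_iff by blast
    then show ?thesis using qc unfolding a_def by simp
  next
    case False
    show ?thesis
    proof (rule ccontr)
      assume nd: "\<not> q dvd p"
      obtain A B r where r0: "r \<noteq> 0" and eq: "A * q + B * p = [:r:]"
        using ideal_step[OF q0 qirr _ nd] False by blast
      have "r * lead_coeff q \<noteq> 0" using r0 q0 by simp
      then obtain pt where pt: "E (r * lead_coeff q) pt \<noteq> 0" using nz unfolding NZ_def by blast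
      then have er: "E r pt \<noteq> 0" and el: "E (lead_coeff q) pt \<noteq> 0" by (simp_all add: homE_D[OF hE])
      define Q where "Q = map_poly (\<lambda>c. E c pt) q"
      have cQ: "coeff Q (degree q) \<noteq> 0" unfolding Q_def using el by (simp add: coeff_map_poly homE_D[OF hE])
      have "degree q \<le> degree Q" using cQ le_degree by blast
      then have "degree Q > 0" using False by simp
      then obtain z where z: "poly Q z = 0" using alg_closed_imp_poly_has_root by blast
      have "liftE E q (pt, z) = 0" using z unfolding Q_def liftE_def by simp
      then have "liftE E p (pt, z) = 0" using Z by blast
      then have "liftE E (A * q + B * p) (pt, z) = 0"
        using \<open>liftE E q (pt, z) = 0\<close> by (simp add: liftE_simps[OF hE])
      then have "E r pt = 0" using eq liftE_const[OF hE, of r "(pt,z)"] by simp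
      with er show False by simp
    qed
  qed
qed

lemma NS_dvd:
  fixes E :: "'a::{factorial_semiring,comm_ring_1} \<Rightarrow> 'p \<Rightarrow> complex"
  assumes hE: "homE E" and ns: "NS E" and sf: "squarefree g"
    and Z: "\<forall>pt. E g pt = 0 \<longrightarrow> E p pt = 0"
  shows "g dvd p"
proof (cases "p = 0")
  case True then show ?thesis by simp
next
  case pn0: False
  have g0: "g \<noteq> 0" using sf by auto
  show ?thesis
  proof (rule multiplicity_le_imp_dvd[OF g0])
    fix q :: 'a assume qp: "prime q"
    have m1: "multiplicity q g \<le> 1" using qp squarefree_factorial_semiring''[OF g0] sf by blast
    show "multiplicity q g \<le> multiplicity q p"
    proof (cases "q dvd g")
      case False
      then show ?thesis by (simp add: not_dvd_imp_multiplicity_0)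
    next
      case True
      then obtain k where gk: "g = q * k" by blast
      have "\<forall>pt. E q pt = 0 \<longrightarrow> E p pt = 0" using Z gk by (simp add: homE_D[OF hE])
      then have "q dvd p" using ns qp unfolding NS_def by (simp add: prime_elem_imp_irreducible)
      moreover have "\<not> is_unit q" using qp by (simp add: prime_def prime_elem_def)
      ultimately have "multiplicity q p \<ge> 1" using pn0
        using multiplicity_gt_zero_iff[of p q] by simp
      then show ?thesis using m1 by simp
    qed
  qed
qed

instance complex :: semiring_gcd_mult_normalize ..

definition E0 :: "complex \<Rightarrow> unit \<Rightarrow> complex" where "E0 c u = c"
abbreviation "E1 \<equiv> liftE E0"
abbreviation "E2 \<equiv> liftE E1"
abbreviation "E3 \<equiv> liftE E2"
abbreviation "E4 \<equiv> liftE E3"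

lemma hom0: "homE E0" unfolding homE_def E0_def by simp
lemma NZ0: "NZ E0" unfolding NZ_def E0_def by simp
lemma NS0: "NS E0" unfolding NS_def E0_def
  by (auto simp: irreducible_def dvd_field_iff)

lemma hom4: "homE E4" and hom3: "homE E3"
  by (simp_all add: homE_lift hom0)
lemma NZ3: "NZ E3" by (simp add: NZ_lift homE_lift hom0 NZ0)
lemma NS1: "NS E1" by (rule NS_lift[OF hom0 NZ0 NS0])
lemma hom1: "homE E1" by (rule homE_lift[OF hom0])
lemma NZ1: "NZ E1" by (rule NZ_lift[OF hom0 NZ0])
lemma hom2: "homE E2" by (rule homE_lift[OF hom1])
lemma NZ2: "NZ E2" by (rule NZ_lift[OF hom1 NZ1])
lemma NS2: "NS E2" by (rule NS_lift[OF hom1 NZ1 NS1])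
lemma NS3: "NS E3" by (rule NS_lift[OF hom2 NZ2 NS2])
lemma NS4: "NS E4" by (rule NS_lift[OF hom3 NZ3 NS3])

lemma ev3_E3: "ev3 f y1 y2 y3 = E3 f ((((),y3),y2),y1)"
  unfolding ev3_def liftE_def E0_def by simp
lemma ev4_E4: "ev4 g d y1 y2 y3 = E4 g (((((),y3),y2),y1),d)"
  unfolding ev4_def ev3_def liftE_def E0_def by simp


lemma poly_map_sum:
  fixes F :: "'a::zero \<Rightarrow> 'b::comm_semiring_1"
  assumes "F 0 = 0" "degree p \<le> N"
  shows "poly (map_poly F p) z = (\<Sum>i\<le>N. F (coeff p i) * z ^ i)"
proof -
  have dm: "degree (map_poly F p) \<le> N"
    using assms by (intro degree_le) (auto simp: coeff_map_poly coeff_eq_0)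
  have "poly (map_poly F p) z = (\<Sum>i\<le>degree (map_poly F p). coeff (map_poly F p) i * z ^ i)"
    by (rule poly_altdef)
  also have "\<dots> = (\<Sum>i\<le>N. coeff (map_poly F p) i * z ^ i)"
    by (rule sum.mono_neutral_left) (use dm in \<open>auto simp: coeff_eq_0\<close>)
  also have "\<dots> = (\<Sum>i\<le>N. F (coeff p i) * z ^ i)" by (simp add: coeff_map_poly assms(1))
  finally show ?thesis .
qed

lemma isCont_poly_map:
  fixes F :: "complex \<Rightarrow> 'a::zero \<Rightarrow> complex"
  assumes "\<And>s. F s 0 = 0" "\<And>c. isCont (\<lambda>s. F s c) s0" "isCont z s0"
  shows "isCont (\<lambda>s. poly (map_poly (F s) p) (z s)) s0"
proof -
  have "(\<lambda>s. poly (map_poly (F s) p) (z s)) = (\<lambda>s. \<Sum>i\<le>degree p. F s (coeff p i) * z s ^ i)"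
    using poly_map_sum[of "F _" p "degree p"] assms(1) by auto
  moreover have "isCont (\<lambda>s. \<Sum>i\<le>degree p. F s (coeff p i) * z s ^ i) s0"
    using assms(2,3) by (intro continuous_intros) auto
  ultimately show ?thesis by simp
qed

lemma isCont_ev4:
  fixes s0 :: complex
  assumes "isCont D s0" "isCont X1 s0" "isCont X2 s0" "isCont X3 s0"
  shows "isCont (\<lambda>s. ev4 h (D s) (X1 s) (X2 s) (X3 s)) s0"
proof -
  have c1: "isCont (\<lambda>s. poly r (X3 s)) s0" for r :: "complex poly"
    using isCont_poly_map[of "\<lambda>s x. x" s0 X3 r] assms by simp
  have c2: "isCont (\<lambda>s. poly (map_poly (\<lambda>r. poly r (X3 s)) q) (X2 s)) s0" for q :: "complex poly poly"
    by (rule isCont_poly_map) (use c1 assms in auto)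
  have c3: "isCont (\<lambda>s. ev3 c (X1 s) (X2 s) (X3 s)) s0" for c
    unfolding ev3_def by (rule isCont_poly_map) (use c2 assms in auto)
  have e0: "ev3 0 a b c = 0" for a b c by (simp add: ev3_def)
  show ?thesis unfolding ev4_def
    by (rule isCont_poly_map[of "\<lambda>s p. ev3 p (X1 s) (X2 s) (X3 s)"]) (use c3 assms e0 in auto)
qed

lemma ev3_hom:
  "ev3 (a + b) y1 y2 y3 = ev3 a y1 y2 y3 + ev3 b y1 y2 y3"
  "ev3 (a * b) y1 y2 y3 = ev3 a y1 y2 y3 * ev3 b y1 y2 y3"
  "ev3 (a ^ n) y1 y2 y3 = ev3 a y1 y2 y3 ^ n"
  "ev3 (- a) y1 y2 y3 = - ev3 a y1 y2 y3"
  "ev3 0 y1 y2 y3 = 0" "ev3 1 y1 y2 y3 = 1"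
  unfolding ev3_E3 by (simp_all add: homE_D[OF hom3] homE_power[OF hom3] homE_minus[OF hom3])

lemma orth_zero:
  fixes a b c v1 v2 v3 :: complex
  assumes "a * v2 - b * v1 = 0" "a * v3 - c * v1 = 0" "b * v3 - c * v2 = 0"
    "v1^2 + v2^2 + v3^2 = 0" "a^2 + b^2 + c^2 \<noteq> 0"
  shows "v1 = 0 \<and> v2 = 0 \<and> v3 = 0"
proof -
  define H where "H = a^2 + b^2 + c^2"
  define s where "s = a * v1 + b * v2 + c * v3"
  have "H * v1 - s * a = b * (b * v1 - a * v2) + c * (c * v1 - a * v3)"
    "H * v2 - s * b = a * (a * v2 - b * v1) + c * (c * v2 - b * v3)"
    "H * v3 - s * c = a * (a * v3 - c * v1) + b * (b * v3 - c * v2)"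
    unfolding H_def s_def by (simp_all add: algebra_simps power2_eq_square)
  then have e1: "H * v1 = s * a" "H * v2 = s * b" "H * v3 = s * c"
    using assms(1-3) by simp_all
  have "(H*v1)^2 + (H*v2)^2 + (H*v3)^2 = (s*a)^2 + (s*b)^2 + (s*c)^2" using e1 by simp
  moreover have "(H*v1)^2 + (H*v2)^2 + (H*v3)^2 = H^2 * (v1^2 + v2^2 + v3^2)"
    by (simp add: algebra_simps power2_eq_square)
  moreover have "(s*a)^2 + (s*b)^2 + (s*c)^2 = s^2 * H"
    unfolding H_def by (simp add: algebra_simps power2_eq_square)
  ultimately have "H^2 * (v1^2 + v2^2 + v3^2) = s^2 * H" by simp
  then have "s^2 * H = 0" using assms(4) by simp
  then have "s = 0" using assms(5) unfolding H_def by simp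
  then show ?thesis using e1 assms(5) unfolding H_def by simp
qed


lemma cont_zero_at:
  fixes \<phi> :: "complex \<Rightarrow> complex"
  assumes "isCont \<phi> 0" "\<And>s. s \<noteq> 0 \<Longrightarrow> \<phi> s = 0"
  shows "\<phi> 0 = 0"
proof -
  have "(\<phi> \<longlongrightarrow> \<phi> 0) (at 0)" using assms(1) isCont_def by blast
  moreover have "eventually (\<lambda>s. \<phi> s = 0) (at (0::complex))"
    using assms(2) by (auto simp: eventually_at_filter)
  ultimately have "((\<lambda>s. 0) \<longlongrightarrow> \<phi> 0) (at (0::complex))"
    using tendsto_cong by (metis (mono_tags, lifting) eventually_mono)
  then show ?thesis using LIM_const_eq by fastforce
qed

lemma negself: fixes x :: "'a::{ring_char_0,idom}" assumes "- x = x" shows "x = 0"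
proof -
  have "x + x = 0" using add.left_inverse[of x] unfolding assms .
  then have "2 * x = 0" unfolding mult_2 .
  moreover have "(2::'a) \<noteq> 0" by (rule zero_neq_numeral[symmetric])
  ultimately show ?thesis by (simp only: mult_eq_0_iff) simp
qed

lemma E4_all:
  assumes "\<And>d x1 x2 x3. ev4 p d x1 x2 x3 = 0 \<Longrightarrow> ev4 q d x1 x2 x3 = 0"
  shows "\<forall>pt. E4 p pt = 0 \<longrightarrow> E4 q pt = 0"
proof (intro allI impI)
  fix pt :: "(((unit \<times> complex) \<times> complex) \<times> complex) \<times> complex"
  assume h: "E4 p pt = 0"
  obtain u x3 x2 x1 d where pt: "pt = ((((u,x3),x2),x1),d)" by (cases pt) auto
  have u: "u = ()" by simp
  show "E4 q pt = 0" using assms[of d x1 x2 x3] h unfolding pt u ev4_E4 by simp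
qed

lemma ev4_pCons0: "ev4 (pCons 0 h) d x1 x2 x3 = d * ev4 h d x1 x2 x3"
  unfolding ev4_def by (simp add: map_poly_pCons ev3_hom)

lemma unit_deg0: "(p :: 'a::idom poly) dvd 1 \<Longrightarrow> degree p = 0"
  using dvd_imp_degree_le[of p 1] by simp

theorem mainTheorem9:
  fixes f :: mpoly3 and g :: mpoly4
  assumes f_irred: "irreducible f"
    and h_nonzero: "\<exists>y1 y2 y3. ev3 f y1 y2 y3 = 0 \<and> ev3 (h_imp f) y1 y2 y3 \<noteq> 0"
    and g_sqfree: "squarefree g"
    and g_defines: "zero_set4 g = generic_offset f"
  shows "\<forall>k. odd k \<longrightarrow> coeff g k = 0"
proof -
  let ?I = "offset_incidence f"
  have g0: "g \<noteq> 0" using g_sqfree by auto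
  have incl: "ev4 g d x1 x2 x3 = 0" if "(d,x1,x2,x3) \<in> ?I" for d x1 x2 x3
  proof -
    have "(d,x1,x2,x3) \<in> generic_offset f" using that
      unfolding generic_offset_def zariski_closure4_def by blast
    then have "(d,x1,x2,x3) \<in> zero_set4 g" using g_defines by simp
    then show ?thesis unfolding zero_set4_def by simp
  qed
  have clos: "ev4 p d x1 x2 x3 = 0"
    if h: "\<And>d x1 x2 x3. (d,x1,x2,x3) \<in> ?I \<Longrightarrow> ev4 p d x1 x2 x3 = 0"
    and z: "ev4 g d x1 x2 x3 = 0" for p d x1 x2 x3
  proof -
    have "?I \<subseteq> zero_set4 p" using h unfolding zero_set4_def by auto
    moreover have "(d,x1,x2,x3) \<in> generic_offset f" using z g_defines[symmetric]
      unfolding zero_set4_def by auto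
    ultimately show ?thesis unfolding generic_offset_def zariski_closure4_def zero_set4_def by auto
  qed
  have sym: "(-d,x1,x2,x3) \<in> ?I" if "(d,x1,x2,x3) \<in> ?I" for d x1 x2 x3
    using that by (simp add: offset_incidence_def)
  define gm where "gm = Poly (map (\<lambda>k. (-1)^k * coeff g k) [0..<Suc (degree g)])"
  have cgm: "coeff gm k = (-1)^k * coeff g k" for k
    unfolding gm_def by (cases "k \<le> degree g") (auto simp: nth_default_def coeff_eq_0 simp del: upt_Suc)
  have dgm: "degree gm \<le> degree g" by (rule degree_le) (auto simp: cgm coeff_eq_0)
  have evgm: "ev4 gm d x1 x2 x3 = ev4 g (-d) x1 x2 x3" for d x1 x2 x3
    unfolding ev4_def
    using poly_map_sum[of "\<lambda>p. ev3 p x1 x2 x3" gm "degree g"]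
      poly_map_sum[of "\<lambda>p. ev3 p x1 x2 x3" g "degree g"] dgm
    by (simp add: cgm ev3_hom power_minus[of d] mult_ac)
  have "g dvd gm"
  proof (rule NS_dvd[OF hom4 NS4 g_sqfree], rule E4_all)
    fix d x1 x2 x3 assume "ev4 g d x1 x2 x3 = 0"
    moreover have "ev4 gm d' y1 y2 y3 = 0" if "(d',y1,y2,y3) \<in> ?I" for d' y1 y2 y3
      using evgm incl sym that by simp
    ultimately show "ev4 gm d x1 x2 x3 = 0" using clos[of gm d x1 x2 x3] by blast
  qed
  then obtain c where gmc: "gm = g * c" by blast
  have lc: "coeff g (degree g) \<noteq> 0" using g0 by simp
  have "coeff gm (degree g) \<noteq> 0" using lc by (simp add: cgm)
  then have gm0: "gm \<noteq> 0" by auto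
  then have c0: "c \<noteq> 0" using gmc by auto
  have "degree gm = degree g + degree c" using gmc g0 c0 by (simp add: degree_mult_eq)
  then have "degree c = 0" using dgm by simp
  then have cc: "c = [:coeff c 0:]" using degree_0_id[of c] by simp
  define c0 where "c0 = coeff c 0"
  have ck: "(-1)^k * coeff g k = c0 * coeff g k" for k
  proof -
    have "gm = g * [:c0:]" using gmc cc unfolding c0_def by simp
    then have "gm = smult c0 g" by simp
    then have "coeff gm k = c0 * coeff g k" by simp
    then show ?thesis by (rule trans[OF cgm[of k, symmetric]])
  qed
  have "(-1)^(degree g) * coeff g (degree g) = c0 * coeff g (degree g)" by (rule ck)
  then have c0v: "c0 = (-1)^(degree g)" using lc by simp
  have key: "(-1)^k * coeff g k = (-1)^(degree g) * coeff g k" for k using ck c0v by simp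
  show ?thesis
  proof (cases "even (degree g)")
    case True
    show ?thesis
    proof (intro allI impI)
      fix k :: nat assume "odd k"
      then have "- coeff g k = coeff g k" using key[of k] True by simp
      then show "coeff g k = 0" by (rule negself)
    qed
  next
    case False
    have "- coeff g 0 = coeff g 0" using key[of 0] False by simp
    then have cg0: "coeff g 0 = 0" by (rule negself)
    obtain a h where gah: "g = pCons a h" by (cases g rule: pCons_cases)
    then have gh: "g = pCons 0 h" using cg0 by simp
    have hd: "ev4 h d x1 x2 x3 = 0" if "(d,x1,x2,x3) \<in> ?I" "d \<noteq> 0" for d x1 x2 x3
      using incl[OF that(1)] that(2) unfolding gh ev4_pCons0 by simp
    have hvan: "ev4 h d x1 x2 x3 = 0" if I: "(d,x1,x2,x3) \<in> ?I" for d x1 x2 x3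
    proof (cases "d = 0")
      case False then show ?thesis using hd I by blast
    next
      case True
      from I obtain y1 y2 y3 u where
        fy: "ev3 f y1 y2 y3 = 0" and
        m1: "ev3 (pd1 f) y1 y2 y3 * (x2 - y2) - ev3 (pd2 f) y1 y2 y3 * (x1 - y1) = 0" and
        m2: "ev3 (pd1 f) y1 y2 y3 * (x3 - y3) - ev3 (pd3 f) y1 y2 y3 * (x1 - y1) = 0" and
        m3: "ev3 (pd2 f) y1 y2 y3 * (x3 - y3) - ev3 (pd3 f) y1 y2 y3 * (x2 - y2) = 0" and
        sq: "(x1 - y1)^2 + (x2 - y2)^2 + (x3 - y3)^2 - d^2 = 0" and
        uh: "u * ev3 (h_imp f) y1 y2 y3 - 1 = 0"
        unfolding offset_incidence_def by blast
      define a1 where "a1 = ev3 (pd1 f) y1 y2 y3"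
      define a2 where "a2 = ev3 (pd2 f) y1 y2 y3"
      define a3 where "a3 = ev3 (pd3 f) y1 y2 y3"
      have Hv: "ev3 (h_imp f) y1 y2 y3 = a1^2 + a2^2 + a3^2"
        unfolding h_imp_def a1_def a2_def a3_def by (simp add: ev3_hom)
      have H0: "a1^2 + a2^2 + a3^2 \<noteq> 0" using uh Hv by auto
      have "x1 - y1 = 0 \<and> x2 - y2 = 0 \<and> x3 - y3 = 0"
        by (rule orth_zero[of a1 "x2 - y2" a2 "x1 - y1" "x3 - y3" a3])
           (use m1 m2 m3 sq True H0 in \<open>simp_all add: a1_def a2_def a3_def\<close>)
      then have xy: "x1 = y1" "x2 = y2" "x3 = y3" by simp_all
      define r where "r = csqrt (a1^2 + a2^2 + a3^2)"
      have r2: "r^2 = a1^2 + a2^2 + a3^2" unfolding r_def by simp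
      have r0: "r \<noteq> 0" using r2 H0 by auto
      define \<phi> where "\<phi> = (\<lambda>s. ev4 h (s * r) (y1 + s * a1) (y2 + s * a2) (y3 + s * a3))"
      have "isCont \<phi> 0" unfolding \<phi>_def by (intro isCont_ev4 continuous_intros)
      moreover have "\<phi> s = 0" if s0: "s \<noteq> 0" for s
      proof -
        have "(s * r, y1 + s * a1, y2 + s * a2, y3 + s * a3) \<in> ?I"
          unfolding offset_incidence_def
        proof (clarify, intro exI conjI)
          show "ev3 f y1 y2 y3 = 0" by (rule fy)
          show "u * ev3 (h_imp f) y1 y2 y3 - 1 = 0" by (rule uh)
          show "(y1 + s * a1 - y1)\<^sup>2 + (y2 + s * a2 - y2)\<^sup>2 + (y3 + s * a3 - y3)\<^sup>2 - (s * r)\<^sup>2 = 0"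
            by (simp add: power_mult_distrib r2 algebra_simps)
        qed (simp_all add: a1_def a2_def a3_def algebra_simps)
        moreover have "s * r \<noteq> 0" using s0 r0 by simp
        ultimately show ?thesis unfolding \<phi>_def using hd by blast
      qed
      ultimately have "\<phi> 0 = 0" by (rule cont_zero_at)
      then show ?thesis unfolding \<phi>_def using True xy by simp
    qed
    have h0: "ev4 h 0 x1 x2 x3 = 0" for x1 x2 x3
      using clos[of h 0 x1 x2 x3] hvan by (simp add: gh ev4_pCons0)
    have "ev4 h 0 x1 x2 x3 = ev3 (coeff h 0) x1 x2 x3" for x1 x2 x3
      unfolding ev4_def by (simp add: poly_0_coeff_0 coeff_map_poly ev3_hom)
    then have "ev3 (coeff h 0) x1 x2 x3 = 0" for x1 x2 x3 using h0 by simp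
    then have "\<forall>pt. E3 (coeff h 0) pt = 0"
    proof (intro allI)
      fix pt :: "((unit \<times> complex) \<times> complex) \<times> complex"
      assume h: "\<And>x1 x2 x3. ev3 (coeff h 0) x1 x2 x3 = 0"
      obtain u x3 x2 x1 where pt: "pt = (((u,x3),x2),x1)" by (cases pt) auto
      have u: "u = ()" by simp
      show "E3 (coeff h 0) pt = 0" using h[of x1 x2 x3] unfolding pt u ev3_E3 by simp
    qed
    then have ch0: "coeff h 0 = 0" using NZ3 unfolding NZ_def by blast
    obtain b h2 where "h = pCons b h2" by (cases h rule: pCons_cases)
    then have hh: "h = pCons 0 h2" using ch0 by simp
    have "g = [:0,1:]^2 * h2" unfolding gh hh by (simp add: power2_eq_square)
    then have "[:0,1:]^2 dvd g" by simp
    then have "([:0,1:] :: mpoly4) dvd 1" using g_sqfree squarefreeD by blast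
    then have "degree ([:0,1:] :: mpoly4) = 0" by (rule unit_deg0)
    then show ?thesis by simp
  qed
qed

end
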